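(* Let $N\geq 0$ be an integer. For every real $t\neq 0$, \[ (-1)^N\left(\frac{\tanh t}{t}-\sum_{j=1}^{N}\frac{2^{2j}(2^{2j}-1)B_{2j}}{(2j)!}t^{2j-2}\right)>0 . \] In particular, for every integer $m\geq 1$ and real $t\neq0$, \[ \sum_{j=1}^{2m}\frac{2^{2j}(2^{2j}-1)B_{2j}}{(2j)!}t^{2j-2}<\frac{\tanh t}{t}<\sum_{j=1}^{2m-1}\frac{2^{2j}(2^{2j}-1)B_{2j}}{(2j)!}t^{2j-2}. \]
   Context: The Bernoulli numbers $B_n$ are defined by $\frac{t}{e^t-1}=\sum_{n=0}^\infty B_n\frac{t^n}{n!}$ for $|t|<2\pi$. An empty sum is understood to be zero. *)

theory Defs
  imports "HOL-Analysis.Analysis" "HOL-Computational_Algebra.Formal_Power_Series"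
begin

text \<open>Bernoulli numbers: B n = n! times the n-th Taylor coefficient of t/(e^t - 1).
  The power series of (e^t - 1)/t is sum_n t^n/(n+1)!, and t/(e^t-1) is its
  (formal power series) inverse; this agrees with the analytic expansion for |t| < 2 pi.\<close>

definition bernoulli_num :: "nat \<Rightarrow> real" where
  "bernoulli_num n = fact n * fps_nth (inverse (Abs_fps (\<lambda>k. 1 / fact (Suc k)))) n"

end

theory Submission
  imports Defs
begin


lemma Re_pos_not_nonpos_Int: "0 < Re (z::complex) \<Longrightarrow> z \<notin> \<int>\<^sub>\<le>\<^sub>0"
  by (auto elim!: nonpos_Ints_cases')

lemma sin_pi_nz: assumes "0 < Re (z::complex)" "Re z < 1" shows "sin (of_real pi * z) \<noteq> 0"
proof
  assume "sin (of_real pi * z) = 0"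
  then obtain n::int where n: "of_real pi * z = of_real (n * pi)" by (auto simp: sin_eq_0)
  hence "Re (of_real pi * z) = n * pi" by (metis Re_complex_of_real)
  hence "pi * Re z = n * pi" by simp
  hence "Re z = n" by simp
  with assms have "0 < n" "n < 1" by simp_all
  thus False by simp
qed

lemma digamma_reflection:
  fixes z :: complex assumes z: "0 < Re z" "Re z < 1"
  shows "Digamma (1 - z) - Digamma z = of_real pi * cot (of_real pi * z)"
proof -
  define S where "S = {w::complex. 0 < Re w \<and> Re w < 1}"
  have oS: "open S" unfolding S_def
    by (intro open_Int[of "{w. 0 < Re w}" "{w. Re w < 1}", simplified Int_def, simplified] open_halfspace_Re_gt open_halfspace_Re_lt)
  have zS: "z \<in> S" using z by (simp add: S_def)
  define f where "f (w::complex) = Gamma w * Gamma (1 - w) * sin (of_real pi * w)" for w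
  have feq: "f w = of_real pi" if "w \<in> S" for w
  proof -
    have "sin (of_real pi * w) \<noteq> 0" using that by (intro sin_pi_nz) (auto simp: S_def)
    thus ?thesis unfolding f_def using Gamma_reflection_complex[of w] by (simp add: field_simps)
  qed
  have d0: "(f has_field_derivative 0) (at z)"
    by (rule has_field_derivative_transform_within_open[of "\<lambda>_. of_real pi" 0 z S])
       (use oS zS feq in auto)
  have nz1: "z \<notin> \<int>\<^sub>\<le>\<^sub>0" "1 - z \<notin> \<int>\<^sub>\<le>\<^sub>0" using z by (auto intro!: Re_pos_not_nonpos_Int)
  have d1: "(f has_field_derivative
      (Gamma z * Digamma z * Gamma (1 - z) * sin (of_real pi * z)
       - Gamma z * (Gamma (1 - z) * Digamma (1 - z)) * sin (of_real pi * z)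
       + Gamma z * Gamma (1 - z) * (cos (of_real pi * z) * of_real pi))) (at z)"
    unfolding f_def using nz1
    by (auto intro!: derivative_eq_intros simp: algebra_simps)
  from DERIV_unique[OF d1 d0]
  have "Gamma z * Gamma (1 - z) * (sin (of_real pi * z) * (Digamma z - Digamma (1 - z)) + of_real pi * cos (of_real pi * z)) = 0"
    by (simp add: algebra_simps)
  moreover have "Gamma z \<noteq> 0" "Gamma (1 - z) \<noteq> 0" using nz1 by (auto simp: Gamma_nonzero)
  ultimately have "sin (of_real pi * z) * (Digamma z - Digamma (1 - z)) + of_real pi * cos (of_real pi * z) = 0"
    by simp
  moreover have "sin (of_real pi * z) \<noteq> 0" using z by (intro sin_pi_nz)
  ultimately show ?thesis by (simp add: cot_def field_simps)
qed

lemma cot_shift: fixes t :: real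
  shows "cot (complex_of_real (pi/2) + \<i> * of_real t) = - \<i> * of_real (tanh t)"
proof -
  have s: "sin (complex_of_real (pi/2)) = 1" "cos (complex_of_real (pi/2)) = 0"
    by (simp_all add: sin_of_real[symmetric] cos_of_real[symmetric])
  have c1: "cos (complex_of_real (pi/2) + \<i> * of_real t) = - sin (\<i> * of_real t)"
    by (simp add: cos_add s)
  have c2: "sin (complex_of_real (pi/2) + \<i> * of_real t) = cos (\<i> * of_real t)"
    by (simp add: sin_add s)
  have e: "exp (complex_of_real t) = of_real (exp t)" by (simp add: exp_of_real)
  have sh: "sin (\<i> * of_real t) = \<i> * of_real ((exp t - exp (-t)) / 2)"
    using sin_i_times[of "of_real t"] by (simp add: e exp_minus)
  have ch: "cos (\<i> * of_real t) = of_real ((exp t + exp (-t)) / 2)"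
    using cosh_complex[of "of_real t"] by (simp add: e exp_minus)
  have pos: "exp t + exp (-t) > 0" by (simp add: add_pos_pos)
  have "cot (complex_of_real (pi/2) + \<i> * of_real t) = - (\<i> * of_real ((exp t - exp (-t)) / 2)) / of_real ((exp t + exp (-t)) / 2)"
    unfolding cot_def c1 c2 sh ch by simp
  also have "\<dots> = - \<i> * of_real (((exp t - exp (-t)) / 2) / ((exp t + exp (-t)) / 2))"
    by (metis minus_mult_left of_real_divide times_divide_eq_right)
  also have "((exp t - exp (-t)) / 2) / ((exp t + exp (-t)) / 2) = tanh t"
    using pos by (simp add: tanh_altdef frac_eq_eq algebra_simps)
  finally show ?thesis .
qed

lemma tanh_pf: fixes t :: real
  shows "(\<lambda>k. 8*t/((2*real k+1)^2*pi^2 + 4*t^2)) sums tanh t"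
proof -
  define y where "y = t / pi"
  define z where "z = complex_of_real (1/2) + \<i> * of_real y"
  have Rez: "Re z = 1/2" by (simp add: z_def)
  have z0: "z \<noteq> 0" "1 - z \<noteq> 0" using Rez by auto
  have s1: "(\<lambda>k. inverse (of_nat (Suc k)) - inverse (z + of_nat k)) sums (Digamma z + euler_mascheroni)"
    using summable_Digamma[OF z0(1)] by (simp add: Digamma_def summable_sums)
  have s2: "(\<lambda>k. inverse (of_nat (Suc k)) - inverse ((1 - z) + of_nat k)) sums (Digamma (1 - z) + euler_mascheroni)"
    using summable_Digamma[OF z0(2)] by (simp add: Digamma_def summable_sums)
  from sums_diff[OF s2 s1]
  have "(\<lambda>k. inverse (z + of_nat k) - inverse ((1 - z) + of_nat k)) sums (Digamma (1 - z) - Digamma z)"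
    by simp
  also have "Digamma (1 - z) - Digamma z = of_real pi * cot (of_real pi * z)"
    using Rez by (intro digamma_reflection) auto
  also have "of_real pi * z = complex_of_real (pi/2) + \<i> * of_real t"
    by (simp add: z_def y_def field_simps)
  also have "cot \<dots> = - \<i> * of_real (tanh t)" by (rule cot_shift)
  finally have A: "(\<lambda>k. inverse (z + of_nat k) - inverse ((1 - z) + of_nat k)) sums (- \<i> * of_real (pi * tanh t))"
    by (simp add: algebra_simps)
  have tm: "inverse (z + of_nat k) - inverse ((1 - z) + of_nat k) = - \<i> * of_real (2*y/((real k + 1/2)^2 + y^2))" for k
  proof -
    have pr: "(z + of_nat k) * ((1 - z) + of_nat k) = of_real ((real k + 1/2)^2 + y^2)"
      by (simp add: z_def complex_eq_iff power2_eq_square algebra_simps)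
    have pp: "(real k + 1/2)^2 + y^2 > 0" by (intro add_pos_nonneg) auto
    have nz: "z + of_nat k \<noteq> 0" "(1 - z) + of_nat k \<noteq> 0" using Rez by (auto simp: complex_eq_iff)
    have "inverse (z + of_nat k) - inverse ((1 - z) + of_nat k) = ((1 - z + of_nat k) - (z + of_nat k)) / ((z + of_nat k) * ((1 - z) + of_nat k))"
      using nz by (simp add: field_simps)
    also have "(1 - z + of_nat k) - (z + of_nat k) = - \<i> * of_real (2*y)" by (simp add: z_def complex_eq_iff)
    finally show ?thesis unfolding pr using pp by (simp add: field_simps)
  qed
  have "(\<lambda>k. (\<i> * (- \<i> * of_real (2*y/((real k + 1/2)^2 + y^2))))) sums (\<i> * (- \<i> * of_real (pi * tanh t)))"
    using A unfolding tm by (rule sums_mult)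
  hence "(\<lambda>k. complex_of_real (2*y/((real k + 1/2)^2 + y^2))) sums complex_of_real (pi * tanh t)"
    by simp
  hence "(\<lambda>k. 2*y/((real k + 1/2)^2 + y^2)) sums (pi * tanh t)"
    by (subst (asm) sums_of_real_iff)
  from sums_divide[OF this, of pi]
  have "(\<lambda>k. 2*y/((real k + 1/2)^2 + y^2) / pi) sums tanh t" by simp
  also have "(\<lambda>k. 2*y/((real k + 1/2)^2 + y^2) / pi) = (\<lambda>k. 8*t/((2*real k+1)^2*pi^2 + 4*t^2))"
  proof
    fix k
    have pp: "(2*real k+1)^2*pi^2 + 4*t^2 > 0" by (intro add_pos_nonneg) auto
    have pp2: "(real k + 1/2)^2 + y^2 > 0" by (intro add_pos_nonneg) auto
    show "2*y/((real k + 1/2)^2 + y^2) / pi = 8*t/((2*real k+1)^2*pi^2 + 4*t^2)"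
    proof -
      have d: "(real k + 1/2)^2 + y^2 = ((2*real k+1)^2*pi^2 + 4*t^2)/(4*pi^2)"
        by (simp add: y_def field_simps power2_eq_square)
      have pq: "pi * (pi * (4 * t\<^sup>2)) + pi * (pi * (pi\<^sup>2 * (1 + real k * 2)\<^sup>2)) > 0"
      proof -
        have "0 < pi * pi * (4 * t\<^sup>2 + pi\<^sup>2 * (1 + real k * 2)\<^sup>2)"
          using pp by (intro mult_pos_pos) (auto simp: algebra_simps)
        thus ?thesis by (simp add: algebra_simps power2_eq_square)
      qed
      show ?thesis unfolding d using pp pq by (simp add: y_def field_simps) (simp add: frac_eq_eq algebra_simps power2_eq_square power4_eq_xxxx)
    qed
  qed
  finally show ?thesis .
qed



definition aa :: "nat \<Rightarrow> real" where "aa k = ((2*real k+1)*pi)^2"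
definition SS :: "nat \<Rightarrow> real" where "SS m = (\<Sum>k. 1 / aa k ^ m)"
definition RR :: "nat \<Rightarrow> real \<Rightarrow> real" where "RR N x = (\<Sum>k. 8 / (aa k ^ N * (aa k + x)))"

lemma aa_pos: "aa k > 0" unfolding aa_def by (simp add: add_pos_nonneg)

lemma aa_ge: "aa k \<ge> (real k + 1)^2"
proof -
  have "pi \<ge> 1" using pi_gt3 by simp
  have "(real k + 1) \<le> (2*real k+1)*pi"
  proof -
    have "(real k + 1) \<le> (2*real k+1)" by simp
    also have "\<dots> \<le> (2*real k+1)*pi" using \<open>pi \<ge> 1\<close> by (simp add: mult_le_cancel_left1)
    finally show ?thesis .
  qed
  thus ?thesis unfolding aa_def by (intro power_mono) auto
qed

lemma aa_ge1: "aa k \<ge> 1"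
  using aa_ge[of k] by (smt (verit) one_le_power of_nat_0_le_iff)

lemma summable_inv_sq: "summable (\<lambda>k. 1 / (real k + 1)^2)"
  using sums_summable[OF inverse_squares_sums] by (simp add: add.commute)

lemma term_bound:
  assumes "x \<ge> 0" shows "0 < 8 / (aa k ^ N * (aa k + x))" "8 / (aa k ^ N * (aa k + x)) \<le> 8 / (real k + 1)^2"
proof -
  have p: "aa k > 0" by (rule aa_pos)
  show "0 < 8 / (aa k ^ N * (aa k + x))" using p assms by simp
  have "(real k + 1)^2 \<le> aa k" by (rule aa_ge)
  also have "aa k \<le> aa k ^ N * (aa k + x)"
  proof -
    have "1 \<le> aa k ^ N" using aa_ge1 by simp
    hence "aa k \<le> aa k ^ N * aa k" using p by (simp add: mult_le_cancel_right1)
    also have "\<dots> \<le> aa k ^ N * (aa k + x)" using assms p by simp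
    finally show ?thesis .
  qed
  moreover have "0 < aa k ^ N * (aa k + x)" using p assms by simp
  ultimately show "8 / (aa k ^ N * (aa k + x)) \<le> 8 / (real k + 1)^2"
    by (intro divide_left_mono) auto
qed

lemma summable_RR: assumes "x \<ge> 0" shows "summable (\<lambda>k. 8 / (aa k ^ N * (aa k + x)))"
proof (rule summable_comparison_test)
  show "\<exists>N0. \<forall>n\<ge>N0. norm (8 / (aa n ^ N * (aa n + x))) \<le> 8 / (real n + 1)^2"
    using term_bound[OF assms] by (auto intro!: exI[of _ 0] simp: less_imp_le)
  show "summable (\<lambda>n. 8 / (real n + 1)^2)" using summable_mult[OF summable_inv_sq, of 8] by simp
qed

lemma summable_SS: assumes "m \<ge> 1" shows "summable (\<lambda>k. 1 / aa k ^ m)"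
proof -
  obtain N where m: "m = Suc N" using assms by (cases m) auto
  have "summable (\<lambda>k. 8 / (aa k ^ N * (aa k + 0)) / 8)"
    using summable_divide[OF summable_RR[of 0 N], of 8] by simp
  thus ?thesis unfolding m by (simp add: mult.commute)
qed

lemma RR_pos: "x \<ge> 0 \<Longrightarrow> RR N x > 0"
  unfolding RR_def by (intro suminf_pos summable_RR term_bound)

lemma RR_le: "x \<ge> 0 \<Longrightarrow> RR N x \<le> RR N 0"
  unfolding RR_def
proof (intro suminf_le summable_RR)
  fix k assume "x \<ge> 0"
  thus "8 / (aa k ^ N * (aa k + x)) \<le> 8 / (aa k ^ N * (aa k + 0))"
    using aa_pos[of k] by (intro divide_left_mono mult_left_mono) auto
qed auto

lemma geom_split:
  fixes a x :: real assumes "a > 0" "x \<ge> 0"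
  shows "8 / (a + x) = (\<Sum>i<N. 8 * (-x)^i / a^(i+1)) + (-x)^N * (8 / (a^N * (a + x)))"
proof (induction N)
  case 0 thus ?case by simp
next
  case (Suc N)
  have p1: "a^N > 0" "a + x > 0" using assms by auto
  have "(-x)^N * (8 / (a^N * (a + x))) = 8 * (-x)^N / a^(N+1) + (-x)^(Suc N) * (8 / (a^(Suc N) * (a + x)))"
    using p1 assms by (simp add: divide_simps) (simp add: algebra_simps)
  with Suc show ?case by simp
qed

lemma tanh_over_t_sums:
  fixes t :: real assumes "t \<noteq> 0"
  shows "(\<lambda>k. 8 / (aa k + 4*t^2)) sums (tanh t / t)"
proof -
  have "(\<lambda>k. 8*t/((2*real k+1)^2*pi^2 + 4*t^2) / t) sums (tanh t / t)"
    by (intro sums_divide tanh_pf)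
  also have "(\<lambda>k. 8*t/((2*real k+1)^2*pi^2 + 4*t^2) / t) = (\<lambda>k. 8 / (aa k + 4*t^2))"
    using assms by (auto simp: aa_def power_mult_distrib)
  finally show ?thesis .
qed

lemma expansion:
  fixes t :: real assumes "t \<noteq> 0"
  shows "tanh t / t = (\<Sum>i<N. 8 * (-4*t^2)^i * SS (i+1)) + (-4*t^2)^N * RR N (4*t^2)"
proof -
  define x where "x = 4*t^2"
  have x: "x \<ge> 0" by (simp add: x_def)
  have "tanh t / t = (\<Sum>k. 8 / (aa k + x))"
    using sums_unique[OF tanh_over_t_sums[OF assms]] by (simp add: x_def)
  also have "\<dots> = (\<Sum>k. (\<Sum>i<N. 8 * (-x)^i * (1 / aa k^(i+1))) + (-x)^N * (8 / (aa k^N * (aa k + x))))"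
    using geom_split[OF aa_pos x] by (simp add: field_simps)
  also have "\<dots> = (\<Sum>k. (\<Sum>i<N. 8 * (-x)^i * (1 / aa k^(i+1)))) + (\<Sum>k. (-x)^N * (8 / (aa k^N * (aa k + x))))"
    by (intro suminf_add[symmetric] summable_sum summable_mult summable_SS summable_RR x) auto
  also have "(\<Sum>k. (\<Sum>i<N. 8 * (-x)^i * (1 / aa k^(i+1)))) = (\<Sum>i<N. (\<Sum>k. 8 * (-x)^i * (1 / aa k^(i+1))))"
    by (intro suminf_sum summable_mult summable_SS) auto
  also have "\<dots> = (\<Sum>i<N. 8 * (-x)^i * SS (i+1))"
    unfolding SS_def by (intro sum.cong refl, rule suminf_mult, rule summable_SS) auto
  also have "(\<Sum>k. (-x)^N * (8 / (aa k^N * (aa k + x)))) = (-x)^N * RR N x"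
    unfolding RR_def by (rule suminf_mult, rule summable_RR, rule x)
  finally show ?thesis by (simp add: x_def)
qed



definition EE :: "real fps" where "EE = Abs_fps (\<lambda>k. 1 / fact (Suc k))"
definition GG :: "real fps" where "GG = inverse EE"
definition HH :: "real fps" where "HH = Abs_fps (\<lambda>n. 2^(n+2) * (2^(n+2) - 1) * fps_nth GG (n+2))"
definition sc :: "real \<Rightarrow> real fps \<Rightarrow> real fps" where "sc c F = F oo (fps_const c * fps_X)"

lemma EE0: "fps_nth EE 0 = 1" by (simp add: EE_def)
lemma GE: "GG * EE = 1" unfolding GG_def by (rule inverse_mult_eq_1) (simp add: EE0)

lemma XE: "fps_X * EE = fps_exp 1 - 1"
proof (rule fps_ext)
  fix n show "fps_nth (fps_X * EE) n = fps_nth (fps_exp 1 - 1) n"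
    by (cases n) (simp_all add: EE_def fps_exp_def)
qed

lemma sc_mult: "sc c (F * G) = sc c F * sc c G"
  unfolding sc_def by (rule fps_compose_mult_distrib) simp

lemma scaled: "(fps_exp c - 1) * sc c GG = fps_const c * fps_X"
proof -
  have "sc c (fps_X * EE) = fps_exp c - 1"
    unfolding XE sc_def by (simp add: fps_compose_sub_distrib)
  moreover have "sc c fps_X = fps_const c * fps_X" unfolding sc_def by simp
  ultimately have 1: "fps_const c * fps_X * sc c EE = fps_exp c - 1" by (simp add: sc_mult)
  have "sc c (GG * EE) = 1" by (simp add: GE sc_def)
  hence 2: "sc c GG * sc c EE = 1" unfolding sc_mult .
  have "(fps_exp c - 1) * sc c GG = fps_const c * fps_X * (sc c GG * sc c EE)"
    by (simp add: 1[symmetric] algebra_simps)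
  thus ?thesis by (simp add: 2)
qed

lemma G01: "fps_nth GG 0 = 1" "fps_nth GG 1 = -1/2"
proof -
  have a: "fps_nth (GG * EE) 0 = 1" "fps_nth (GG * EE) 1 = 0" by (simp_all add: GE)
  from a(1) show g0: "fps_nth GG 0 = 1" by (simp add: fps_mult_nth EE_def)
  from a(2) g0 show "fps_nth GG 1 = -1/2" by (simp add: fps_mult_nth EE_def numeral_2_eq_2)
qed

lemma sc_nth [simp]: "fps_nth (sc c F) n = c^n * fps_nth F n"
  unfolding sc_def by simp

lemma XXH: "fps_X * fps_X * HH = fps_X + sc 4 GG - sc 2 GG"
proof (rule fps_ext)
  fix n
  show "fps_nth (fps_X * fps_X * HH) n = fps_nth (fps_X + sc 4 GG - sc 2 GG) n"
  proof (cases n)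
    case 0 thus ?thesis by (simp add: sc_def mult.assoc)
  next
    case (Suc m) note m = Suc
    show ?thesis
    proof (cases m)
      case 0 thus ?thesis using m G01 by (simp add: sc_def mult.assoc)
    next
      case (Suc k)
      have "(4::real)^(k+2) = 2^(k+2) * 2^(k+2)" by (simp flip: power_mult_distrib)
      thus ?thesis using m Suc by (simp add: mult.assoc HH_def del: sc_def) (simp add: algebra_simps)
    qed
  qed
qed

definition T0 :: "real fps" where "T0 = (fps_exp 2 - 1) / (fps_exp 2 + 1)"

lemma T0_eq: "T0 = fps_X * HH"
proof -
  define E2 :: "real fps" where "E2 = fps_exp 2"
  define A where "A = sc 2 GG"
  define B where "B = sc 4 GG"
  have hA: "(E2 - 1) * A = 2 * fps_X" using scaled[of 2] by (simp add: E2_def A_def numeral_fps_const)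
  have e4: "fps_exp (4::real) = E2 * E2" unfolding E2_def using fps_exp_add_mult[of 2 2] by simp
  have hB: "(E2 * E2 - 1) * B = 4 * fps_X" using scaled[of 4] by (simp add: e4 B_def numeral_fps_const)
  have "(E2 - 1) * ((B - A) * (E2 + 1) + 2 * fps_X) = (E2 * E2 - 1) * B - (E2 + 1) * ((E2 - 1) * A) + 2 * fps_X * (E2 - 1)"
    by (simp add: algebra_simps)
  also have "\<dots> = 0" unfolding hA hB by (simp add: algebra_simps)
  finally have "(E2 - 1) * ((B - A) * (E2 + 1) + 2 * fps_X) = 0" .
  moreover have "E2 - 1 \<noteq> 0"
  proof
    assume "E2 - 1 = 0" hence "fps_nth (E2 - 1) 1 = 0" by simp
    thus False by (simp add: E2_def fps_exp_def)
  qed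
  ultimately have Y: "(B - A) * (E2 + 1) + 2 * fps_X = 0" by (metis mult_eq_0_iff)
  have "(B - A) * (E2 + 1) = ((B - A) * (E2 + 1) + 2 * fps_X) - 2 * fps_X" by simp
  also have "\<dots> = - 2 * fps_X" unfolding Y by simp
  finally have BA: "(B - A) * (E2 + 1) = - 2 * fps_X" .
  have u: "fps_nth (E2 + 1) 0 \<noteq> 0" by (simp add: E2_def fps_exp_def)
  have T0m: "T0 * (E2 + 1) = E2 - 1"
    unfolding T0_def E2_def[symmetric] using u by (simp add: fps_divide_unit mult.assoc inverse_mult_eq_1)
  have "fps_X * (fps_X * HH) * (E2 + 1) = fps_X * T0 * (E2 + 1)"
  proof -
    have "fps_X * (fps_X * HH) = fps_X + (B - A)"
      using XXH by (simp add: A_def B_def mult.assoc)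
    hence "fps_X * (fps_X * HH) * (E2 + 1) = (fps_X + (B - A)) * (E2 + 1)" by simp
    also have "\<dots> = fps_X * (E2 - 1)" using BA by (simp add: algebra_simps)
    also have "\<dots> = fps_X * T0 * (E2 + 1)" using T0m by (simp add: mult.assoc)
    finally show ?thesis .
  qed
  moreover have "E2 + 1 \<noteq> 0"
  proof
    assume "E2 + 1 = 0" hence "fps_nth (E2 + 1) 0 = 0" by simp
    with u show False by simp
  qed
  ultimately have "fps_X * (fps_X * HH) = fps_X * T0" by simp
  thus ?thesis by simp
qed

lemma tanh_exp2: "tanh (x::real) = (exp (2*x) - 1) / (exp (2*x) + 1)"
proof -
  have e: "exp (2*x) = exp x * exp x" by (simp add: exp_add[symmetric])
  have p: "exp x > 0" by simp
  have p2: "exp x + exp x * (exp x * exp x) > 0" "1 + exp x * exp x > 0" using p by (auto intro: add_pos_pos)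
  show ?thesis unfolding tanh_altdef e using p p2 by (simp add: exp_minus field_simps frac_eq_eq)
qed

lemma HH_expansion:
  "fps_conv_radius HH > 0" "eventually (\<lambda>t. eval_fps HH t = tanh t / t) (at (0::real))"
proof -
  have "(\<lambda>x::real. (exp (2*x) - 1) / (exp (2*x) + 1)) has_fps_expansion T0"
    unfolding T0_def
    by (intro has_fps_expansion_divide' has_fps_expansion_diff has_fps_expansion_add has_fps_expansion_exp
          has_fps_expansion_1) (simp add: fps_exp_def)
  hence t: "tanh has_fps_expansion T0" by (simp add: tanh_exp2[abs_def])
  have T0nz: "T0 \<noteq> 0"
  proof
    assume "T0 = 0"
    hence "T0 * (fps_exp 2 + 1) = 0" by simp
    moreover have "T0 * (fps_exp 2 + 1) = fps_exp 2 - 1"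
      unfolding T0_def by (simp add: fps_divide_unit mult.assoc inverse_mult_eq_1 fps_exp_def)
    ultimately have "fps_nth (fps_exp (2::real) - 1) 1 = 0" by simp
    thus False by (simp add: fps_exp_def)
  qed
  have sd: "1 \<le> subdegree T0"
    by (rule subdegree_geI[OF T0nz]) (simp add: T0_eq)
  have "(\<lambda>x::real. if x = 0 then fps_nth T0 1 else tanh x / x ^ 1) has_fps_expansion fps_shift 1 T0"
    by (rule has_fps_expansion_shift[OF t sd refl])
  also have "fps_shift 1 T0 = HH" unfolding T0_eq by (subst mult.commute) (rule fps_shift_times_fps_X')
  finally have h: "(\<lambda>x::real. if x = 0 then fps_nth T0 1 else tanh x / x) has_fps_expansion HH" by (simp only: power_one_right)
  thus "fps_conv_radius HH > 0" by (simp add: has_fps_expansion_def)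
  from h have "eventually (\<lambda>t. eval_fps HH t = (if t = 0 then fps_nth T0 1 else tanh t / t)) (nhds 0)"
    by (simp add: has_fps_expansion_def)
  hence "eventually (\<lambda>t. t \<noteq> 0 \<longrightarrow> t \<in> UNIV \<longrightarrow> eval_fps HH t = tanh t / t) (nhds 0)"
    by (rule eventually_mono) auto
  thus "eventually (\<lambda>t. eval_fps HH t = tanh t / t) (at (0::real))"
    by (subst eventually_at_filter)
qed



lemma eval_split:
  fixes F :: "real fps" and z :: real
  assumes "norm z < fps_conv_radius F"
  shows "eval_fps F z = (\<Sum>i<m. fps_nth F i * z^i) + z^m * eval_fps (fps_shift m F) z"
proof -
  have s: "(\<lambda>n. fps_nth F n * z^n) sums eval_fps F z" using assms by (rule sums_eval_fps)
  have s2: "(\<lambda>i. fps_nth (fps_shift m F) i * z^i) sums eval_fps (fps_shift m F) z"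
    using assms by (intro sums_eval_fps) simp
  have "(\<lambda>i. fps_nth F (i + m) * z^(i + m)) sums (eval_fps F z - (\<Sum>i<m. fps_nth F i * z^i))"
    using sums_split_initial_segment[OF s] .
  moreover have "(\<lambda>i. fps_nth F (i + m) * z^(i + m)) sums (z^m * eval_fps (fps_shift m F) z)"
    using sums_mult[OF s2, of "z^m"] by (simp add: power_add algebra_simps)
  ultimately have "eval_fps F z - (\<Sum>i<m. fps_nth F i * z^i) = z^m * eval_fps (fps_shift m F) z"
    using sums_unique2 by blast
  thus ?thesis by simp
qed

lemma P_lim: "((\<lambda>t. (tanh t / t - (\<Sum>i<Suc n. fps_nth HH i * t^i)) / t^n) \<longlongrightarrow> 0) (at (0::real))"
proof -
  define G where "G = fps_shift (Suc n) HH"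
  have r: "fps_conv_radius HH > 0" by (rule HH_expansion(1))
  have "eventually (\<lambda>t::real. t \<in> eball 0 (fps_conv_radius HH)) (nhds 0)"
    using r by (intro eventually_nhds_in_open) (auto simp: zero_ereal_def)
  hence ev1: "eventually (\<lambda>t::real. t \<in> eball 0 (fps_conv_radius HH)) (at 0)"
    by (rule filter_leD[rotated]) (simp add: at_within_def)
  have ev3: "eventually (\<lambda>t::real. t \<noteq> 0) (at 0)" by (simp add: eventually_at_filter)
  have "eventually (\<lambda>t. t * eval_fps G t = (tanh t / t - (\<Sum>i<Suc n. fps_nth HH i * t^i)) / t^n) (at (0::real))"
    using ev1 HH_expansion(2) ev3
  proof eventually_elim
    case (elim t)
    hence t0: "t \<noteq> 0" by simp
    have "eval_fps HH t = (\<Sum>i<Suc n. fps_nth HH i * t^i) + t^Suc n * eval_fps G t"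
      unfolding G_def using elim by (intro eval_split) simp
    hence "tanh t / t - (\<Sum>i<Suc n. fps_nth HH i * t^i) = t^Suc n * eval_fps G t" using elim by simp
    thus ?case using t0 by (simp add: field_simps)
  qed
  moreover have "((\<lambda>t. t * eval_fps G t) \<longlongrightarrow> 0 * eval_fps G 0) (at (0::real))"
  proof (intro tendsto_intros)
    have "continuous (at (0::real)) (eval_fps G)"
      using r by (intro continuous_eval_fps) (simp add: G_def zero_ereal_def)
    thus "((eval_fps G) \<longlongrightarrow> eval_fps G 0) (at 0)" by (simp add: continuous_at)
  qed
  ultimately show ?thesis by (simp add: tendsto_cong)
qed

definition qq :: "nat \<Rightarrow> real" where
  "qq n = (if even n then 8 * (-4)^(n div 2) * SS (n div 2 + 1) else 0)"

lemma pw: "(-(4*x))^N = (-4)^N * (x::real)^N" by (metis mult_minus_left power_mult_distrib)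

lemma qsum: "(\<Sum>i<2*N. qq i * t^i) = (\<Sum>i<N. 8 * (-4*t^2)^i * SS (i+1))"
proof (induction N)
  case 0 thus ?case by simp
next
  case (Suc N)
  have "(\<Sum>i<2*Suc N. qq i * t^i) = (\<Sum>i<2*N. qq i * t^i) + qq (2*N) * t^(2*N) + qq (2*N+1) * t^(2*N+1)"
    by simp
  also have "qq (2*N+1) = 0" by (simp add: qq_def)
  also have "qq (2*N) * t^(2*N) = 8 * (-4*t^2)^N * SS (N+1)"
    by (simp add: qq_def pw power_mult)
  finally show ?case using Suc by simp
qed

lemma qsum2: "(\<Sum>i<Suc n. qq i * t^i) = (\<Sum>i<2*(n div 2 + 1). qq i * t^i)"
proof (cases "even n")
  case True
  hence e: "2*(n div 2 + 1) = Suc (Suc n)" by simp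
  have "qq (Suc n) = 0" using True by (simp add: qq_def)
  thus ?thesis unfolding e by simp
next
  case False
  hence "2*(n div 2 + 1) = Suc n" by presburger
  thus ?thesis by simp
qed

lemma Q_lim: "((\<lambda>t. (tanh t / t - (\<Sum>i<Suc n. qq i * t^i)) / t^n) \<longlongrightarrow> 0) (at (0::real))"
proof -
  define N where "N = n div 2 + 1"
  have Nn: "n < 2*N" unfolding N_def by presburger
  define C where "C = 4^N * RR N 0"
  have eq: "(tanh t / t - (\<Sum>i<Suc n. qq i * t^i)) / t^n = (-4)^N * t^(2*N - n) * RR N (4*t^2)" if t: "t \<noteq> 0" for t :: real
  proof -
    have "tanh t / t - (\<Sum>i<Suc n. qq i * t^i) = (-4*t^2)^N * RR N (4*t^2)"
      unfolding qsum2 N_def[symmetric] qsum using expansion[OF t, of N] by simp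
    also have "(-4*t^2)^N = (-4)^N * (t^(2*N - n) * t^n)"
      using Nn by (simp add: pw power_mult[symmetric] power_add[symmetric])
    finally show ?thesis using t by (simp add: field_simps)
  qed
  show ?thesis
  proof (rule Lim_null_comparison)
    show "eventually (\<lambda>t. norm ((tanh t / t - (\<Sum>i<Suc n. qq i * t^i)) / t^n) \<le> C * \<bar>t\<bar>^(2*N - n)) (at (0::real))"
      unfolding eventually_at_filter
    proof (intro always_eventually allI impI)
      fix t :: real assume t: "t \<noteq> 0"
      have R: "0 < RR N (4*t^2)" "RR N (4*t^2) \<le> RR N 0" by (auto intro: RR_pos RR_le)
      have "norm ((tanh t / t - (\<Sum>i<Suc n. qq i * t^i)) / t^n) = 4^N * \<bar>t\<bar>^(2*N - n) * RR N (4*t^2)"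
        unfolding eq[OF t] using R by (simp add: abs_mult power_abs)
      also have "\<dots> \<le> C * \<bar>t\<bar>^(2*N - n)" unfolding C_def using R
        by (simp add: mult_left_mono mult.commute mult.left_commute) (metis mult.commute mult_left_mono zero_le_power abs_ge_zero)
      finally show "norm ((tanh t / t - (\<Sum>i<Suc n. qq i * t^i)) / t^n) \<le> C * \<bar>t\<bar>^(2*N - n)" .
    qed
    have "((\<lambda>t::real. C * \<bar>t\<bar>^(2*N - n)) \<longlongrightarrow> C * \<bar>0\<bar>^(2*N - n)) (at 0)"
      by (intro tendsto_intros)
    moreover have "(0::real) ^ (2*N - n) = 0" using Nn by simp
    ultimately show "((\<lambda>t::real. C * \<bar>t\<bar>^(2*N - n)) \<longlongrightarrow> 0) (at 0)" by simp
  qed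
qed

lemma HH_qq: "fps_nth HH n = qq n"
proof (induction n rule: less_induct)
  case (less n)
  define c where "c = fps_nth HH n - qq n"
  have "eventually (\<lambda>t. (tanh t / t - (\<Sum>i<Suc n. qq i * t^i)) / t^n - (tanh t / t - (\<Sum>i<Suc n. fps_nth HH i * t^i)) / t^n = c) (at (0::real))"
    unfolding eventually_at_filter
  proof (intro always_eventually allI impI)
    fix t :: real assume t: "t \<noteq> 0"
    have "(\<Sum>i<Suc n. fps_nth HH i * t^i) - (\<Sum>i<Suc n. qq i * t^i) = (\<Sum>i<Suc n. (fps_nth HH i - qq i) * t^i)"
      by (simp add: sum_subtractf algebra_simps)
    also have "\<dots> = c * t^n" using less by (simp add: c_def)
    finally show "(tanh t / t - (\<Sum>i<Suc n. qq i * t^i)) / t^n - (tanh t / t - (\<Sum>i<Suc n. fps_nth HH i * t^i)) / t^n = c"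
      using t by (simp add: field_simps)
  qed
  moreover have "((\<lambda>t. (tanh t / t - (\<Sum>i<Suc n. qq i * t^i)) / t^n - (tanh t / t - (\<Sum>i<Suc n. fps_nth HH i * t^i)) / t^n) \<longlongrightarrow> 0 - 0) (at (0::real))"
    by (intro tendsto_diff Q_lim P_lim)
  ultimately have "((\<lambda>t. c) \<longlongrightarrow> 0) (at (0::real))" by (simp add: tendsto_cong)
  hence "c = 0" by (simp add: tendsto_const_iff)
  thus ?case by (simp add: c_def)
qed



lemma coeff:
  assumes "j \<ge> 1"
  shows "2 ^ (2*j) * (2 ^ (2*j) - 1) * bernoulli_num (2*j) / fact (2*j) = 8 * (-4)^(j-1) * SS j"
proof -
  have b: "bernoulli_num (2*j) = fact (2*j) * fps_nth GG (2*j)"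
    unfolding bernoulli_num_def GG_def EE_def ..
  have "2 ^ (2*j) * (2 ^ (2*j) - 1) * bernoulli_num (2*j) / fact (2*j) = 2 ^ (2*j) * (2 ^ (2*j) - 1) * fps_nth GG (2*j)"
    unfolding b by simp
  also have "\<dots> = fps_nth HH (2*j - 2)"
    using assms by (cases j) (simp_all add: HH_def)
  also have "\<dots> = qq (2*j - 2)" by (rule HH_qq)
  also have "\<dots> = 8 * (-4)^(j-1) * SS j"
    using assms by (cases j) (simp_all add: qq_def)
  finally show ?thesis .
qed

lemma partial_sum:
  fixes t :: real
  shows "(\<Sum>j=1..N. 2 ^ (2*j) * (2 ^ (2*j) - 1) * bernoulli_num (2*j) / fact (2*j) * t ^ (2*j - 2))
         = (\<Sum>i<N. 8 * (-4*t^2)^i * SS (i+1))"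
proof -
  have "(\<Sum>j=1..N. 2 ^ (2*j) * (2 ^ (2*j) - 1) * bernoulli_num (2*j) / fact (2*j) * t ^ (2*j - 2))
      = (\<Sum>j=1..N. 8 * (-4)^(j-1) * SS j * t ^ (2*j - 2))"
    by (intro sum.cong refl) (simp add: coeff)
  also have "\<dots> = (\<Sum>i<N. 8 * (-4)^i * SS (Suc i) * t ^ (2*i))"
    by (simp add: sum.atLeast1_atMost_eq)
  also have "\<dots> = (\<Sum>i<N. 8 * (-4*t^2)^i * SS (i+1))"
    by (intro sum.cong refl) (simp add: pw power_mult)
  finally show ?thesis .
qed

lemma main:
  fixes t :: real assumes t: "t \<noteq> 0"
  shows "(-1) ^ N * (tanh t / t -
             (\<Sum>j=1..N. 2 ^ (2*j) * (2 ^ (2*j) - 1) * bernoulli_num (2*j) / fact (2*j) * t ^ (2*j - 2))) > 0"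
proof -
  have "(-1) ^ N * (tanh t / t -
             (\<Sum>j=1..N. 2 ^ (2*j) * (2 ^ (2*j) - 1) * bernoulli_num (2*j) / fact (2*j) * t ^ (2*j - 2)))
        = (-1)^N * ((-4*t^2)^N * RR N (4*t^2))"
    unfolding partial_sum using expansion[OF t, of N] by simp
  also have "\<dots> = (4*t^2)^N * RR N (4*t^2)"
  proof -
    have "(-1::real)^N * (-4*t^2)^N = ((-1) * (-4*t^2))^N" by (rule power_mult_distrib[symmetric])
    thus ?thesis by simp
  qed
  also have "\<dots> > 0" using t by (intro mult_pos_pos RR_pos) auto
  finally show ?thesis .
qed


theorem corollary1:
  shows "(\<forall>(N::nat) (t::real). t \<noteq> 0 \<longrightarrow>
           (-1) ^ N * (tanh t / t -
             (\<Sum>j=1..N. 2 ^ (2*j) * (2 ^ (2*j) - 1) * bernoulli_num (2*j) / fact (2*j) * t ^ (2*j - 2))) > 0)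
       \<and> (\<forall>(m::nat) (t::real). m \<ge> 1 \<longrightarrow> t \<noteq> 0 \<longrightarrow>
           (\<Sum>j=1..2*m. 2 ^ (2*j) * (2 ^ (2*j) - 1) * bernoulli_num (2*j) / fact (2*j) * t ^ (2*j - 2)) < tanh t / t
         \<and> tanh t / t < (\<Sum>j=1..2*m-1. 2 ^ (2*j) * (2 ^ (2*j) - 1) * bernoulli_num (2*j) / fact (2*j) * t ^ (2*j - 2)))"
proof (intro conjI allI impI)
  fix N :: nat and t :: real assume "t \<noteq> 0"
  thus "(-1) ^ N * (tanh t / t -
             (\<Sum>j=1..N. 2 ^ (2*j) * (2 ^ (2*j) - 1) * bernoulli_num (2*j) / fact (2*j) * t ^ (2*j - 2))) > 0"
    by (rule main)
next
  fix m :: nat and t :: real assume m: "m \<ge> 1" and t: "t \<noteq> 0"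
  from main[OF t, of "2*m"]
  show "(\<Sum>j=1..2*m. 2 ^ (2*j) * (2 ^ (2*j) - 1) * bernoulli_num (2*j) / fact (2*j) * t ^ (2*j - 2)) < tanh t / t"
    by simp
next
  fix m :: nat and t :: real assume m: "m \<ge> 1" and t: "t \<noteq> 0"
  have o: "odd (2*m - 1)" using m by presburger
  from main[OF t, of "2*m - 1"] o
  show "tanh t / t < (\<Sum>j=1..2*m-1. 2 ^ (2*j) * (2 ^ (2*j) - 1) * bernoulli_num (2*j) / fact (2*j) * t ^ (2*j - 2))"
    by simp
qed

end
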